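(* For every $n\ge 3$, all nonnegative integers $l_1,\dots,l_n,l_\infty$, and every $i$ with $2\le i\le n-1$, the elements $s_{i,i+1}s_{i-1,i}s_{i,i+1}$ and $s_{i-1,i}s_{i,i+1}s_{i-1,i}$ of $J_n$ act identically on $X(l_1,\dots,l_n,l_\infty)$.
   Context: Cactus group: $J_n$ is the group generated by $s_{p,q}$, $1\le p<q\le n$, subject to the relations $s_{p,q}^2=e$; $s_{p,q}s_{p',q'}=s_{p',q'}s_{p,q}$ if $[p,q]$ and $[p',q']$ are disjoint; $s_{p,q}s_{p',q'}s_{p,q}=s_{p+q-q',p+q-p'}$ if $p\le p'<q'\le q$. Arc diagrams: fix nonnegative integers $l_1,\dots,l_n,l_\infty$. On the boundary circle of a closed disc place $n+1$ marked positions: position $0$ (occupied by $z_\infty$) and positions $1,\dots,n$ following it clockwise. An arc diagram is a bijective assignment of labels $z_1,\dots,z_n$ to positions $1,\dots,n$ together with a finite collection of simple arcs in the disc, pairwise disjoint except at endpoints, each joining two distinct marked points, such that $z_j$ is an endpoint of exactly $l_j$ arcs ($j\in\{1,\dots,n,\infty\}$; $l_j$ is the valence). Parallel arcs are allowed; diagrams are up to isotopy, equivalently determined by the labelling and the number of arcs between each pair of marked points. $X(l_1,\dots,l_n,l_\infty)$ is the set of such diagrams. Action: $s_{p,q}$ ($1\le p<q\le n$) acts by cutting off positions $p,\dots,q$ with a chord $\ell$ (arcs isotoped to cross $\ell$ at most once), reflecting that region by the reflection reversing $\ell$ (label at position $p+t$ goes to position $q-t$, crossing points on $\ell$ reversed),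 leaving the rest unchanged and reconnecting arcs at $\ell$. Words act right to left; this is an action of $J_n$. *)

theory Defs
  imports Main
begin

text \<open>Marked positions are 0 (occupied by z_inf) and 1..n (clockwise).
  A diagram is encoded as a pair (lab, m):
  lab p = j means that the label z_j sits at position p (1 \<le> p \<le> n);
  m a b = number of arcs joining positions a and b.\<close>

type_synonym arc_diagram = "(nat \<Rightarrow> nat) \<times> (nat \<Rightarrow> nat \<Rightarrow> nat)"

definition arc_diagrams :: "nat \<Rightarrow> (nat \<Rightarrow> nat) \<Rightarrow> nat \<Rightarrow> arc_diagram set" where
  "arc_diagrams n l linf = {(lab, m).
      bij_betw lab {1..n} {1..n} \<and> (\<forall>x. x \<notin> {1..n} \<longrightarrow> lab x = 0) \<and>
      (\<forall>a b. m a b = m b a) \<and> (\<forall>a. m a a = 0) \<and>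
      (\<forall>a b. (a > n \<or> b > n) \<longrightarrow> m a b = 0) \<and>
      (\<forall>a b c d. a < c \<and> c < b \<and> b < d \<and> 0 < m a b \<longrightarrow> m c d = 0) \<and>
      (\<Sum>b\<in>{0..n}. m 0 b) = linf \<and>
      (\<forall>p\<in>{1..n}. (\<Sum>b\<in>{0..n}. m p b) = l (lab p))}"

definition cinside :: "nat \<Rightarrow> nat \<Rightarrow> nat \<Rightarrow> bool" where
  "cinside p q x \<longleftrightarrow> p \<le> x \<and> x \<le> q"

definition crefl :: "nat \<Rightarrow> nat \<Rightarrow> nat \<Rightarrow> nat" where
  "crefl p q x = (if p \<le> x \<and> x \<le> q then p + q - x else x)"

text \<open>Outer positions listed along the chord from its p-end to its q-end:
  p-1, ..., 0, n, ..., q+1. Arcs crossing the chord, after reflection of the inner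
  region, are reconnected: the j-th crossing point (from the p-end) joins the j-th
  outer endpoint with the j-th (ascending) reflected inner endpoint.\<close>

definition cross_pairs :: "nat \<Rightarrow> nat \<Rightarrow> nat \<Rightarrow> (nat \<Rightarrow> nat \<Rightarrow> nat) \<Rightarrow> (nat \<times> nat) list" where
  "cross_pairs n p q m =
    (let outer = rev ([Suc q..<Suc n] @ [0..<p]);
         c = (\<lambda>x. \<Sum>y\<in>set outer. m x y);
         ins = concat (map (\<lambda>x. replicate (c (p + q - x)) x) [p..<Suc q]);
         outs = concat (map (\<lambda>y. replicate (\<Sum>x\<in>{p..q}. m x y) y) outer)
     in zip ins outs)"

definition cactus_gen_act :: "nat \<Rightarrow> nat \<Rightarrow> nat \<Rightarrow> arc_diagram \<Rightarrow> arc_diagram" where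
  "cactus_gen_act n p q D =
    (let lab = fst D; m = snd D; prs = cross_pairs n p q m in
     (\<lambda>x. lab (crefl p q x),
      \<lambda>a b. if cinside p q a \<and> cinside p q b then m (crefl p q a) (crefl p q b)
            else if \<not> cinside p q a \<and> \<not> cinside p q b then m a b
            else if cinside p q a then count_list prs (a, b)
            else count_list prs (b, a)))"

end

theory Submission
  imports Defs
begin


lemma concat_rep_sorted:
  "sorted xs \<Longrightarrow> \<forall>x\<in>set xs. lo \<le> x \<and> x < k \<Longrightarrow>
   concat (map (\<lambda>j. replicate (count_list xs j) j) [lo..<k]) = xs"
proof (induction xs arbitrary: lo)
  case Nil
  then show ?case by (induction k) auto
next
  case (Cons x xs)
  have x: "lo \<le> x" "x < k" using Cons.prems by auto
  have xs_ge: "\<forall>y\<in>set xs. x \<le> y \<and> y < k" using Cons.prems by auto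
  have split: "[lo..<k] = [lo..<x] @ x # [Suc x..<k]"
    using x by (metis le_Suc_ex upt_add_eq_append upt_conv_Cons less_imp_le_nat)
  have z: "concat (map (\<lambda>j. replicate (count_list (x#xs) j) j) [lo..<x]) = []"
  proof -
    have "\<forall>j\<in>set [lo..<x]. count_list (x#xs) j = 0"
      using xs_ge by (auto simp: count_list_0_iff)
    then show ?thesis by (induction "[lo..<x]" arbitrary: lo) (auto simp: concat_eq_Nil_conv)
  qed
  have r: "map (\<lambda>j. replicate (count_list (x#xs) j) j) [Suc x..<k] =
           map (\<lambda>j. replicate (count_list xs j) j) [Suc x..<k]" by auto
  have ih: "concat (map (\<lambda>j. replicate (count_list xs j) j) [x..<k]) = xs"
    using Cons.IH Cons.prems(1) xs_ge by auto
  have s2: "[x..<k] = x # [Suc x..<k]" using x by (simp add: upt_conv_Cons)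
  have c: "count_list (x#xs) x = Suc (count_list xs x)" by simp
  have "concat (map (\<lambda>j. replicate (count_list (x#xs) j) j) [lo..<k]) =
     concat (map (\<lambda>j. replicate (count_list (x#xs) j) j) [lo..<x]) @ replicate (count_list (x#xs) x) x
     @ concat (map (\<lambda>j. replicate (count_list (x#xs) j) j) [Suc x..<k])"
    unfolding split by simp
  also have "\<dots> = x # (replicate (count_list xs x) x @ concat (map (\<lambda>j. replicate (count_list xs j) j) [Suc x..<k]))"
    by (simp only: z r c append_Nil replicate_Suc append_Cons)
  also have "\<dots> = x # xs" using ih unfolding s2 by simp
  finally show ?case .
qed



definition fo :: "nat \<Rightarrow> nat \<Rightarrow> nat \<Rightarrow> nat" where
  "fo a n y = (if y < a then a - 1 - y else n + a - y)"
definition inO :: "nat \<Rightarrow> nat \<Rightarrow> nat \<Rightarrow> bool" where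
  "inO a n y \<longleftrightarrow> y < a \<or> (Suc (Suc a) < y \<and> y \<le> n)"

definition Tm :: "nat \<Rightarrow> nat \<Rightarrow> bool" where
  "Tm a x \<longleftrightarrow> a \<le> x \<and> x \<le> Suc (Suc a)"
definition seg :: "nat \<Rightarrow> nat list \<Rightarrow> nat \<Rightarrow> nat \<Rightarrow> nat \<Rightarrow> nat list" where
  "seg a W u v x = (if x = a then take u W else if x = Suc a then drop u (take v W) else drop v W)"
definition tri :: "nat \<Rightarrow> nat \<Rightarrow> nat \<Rightarrow> nat \<Rightarrow> nat \<Rightarrow> nat \<Rightarrow> nat" where
  "tri a ab bc ac x y = (if x = y then 0 else if x + y = a + Suc a then ab
      else if x + y = Suc a + Suc (Suc a) then bc else ac)"
definition MM :: "nat \<Rightarrow> nat \<Rightarrow> nat list \<Rightarrow> nat \<Rightarrow> nat \<Rightarrow> nat \<Rightarrow> nat \<Rightarrow> nat \<Rightarrow> (nat \<Rightarrow> nat \<Rightarrow> nat) \<Rightarrow> nat \<Rightarrow> nat \<Rightarrow> nat" where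
  "MM a n W u v ab bc ac m0 x y =
    (if Tm a x \<and> Tm a y then tri a ab bc ac x y
     else if Tm a x then (if inO a n y then count_list (seg a W u v x) (fo a n y) else 0)
     else if Tm a y then (if inO a n x then count_list (seg a W u v y) (fo a n x) else 0)
     else m0 x y)"

lemma count_zip_rep: "count_list (zip (replicate s p @ replicate t q) zs) (x, y) =
   (if x = p then count_list (take s zs) y else 0) + (if x = q then count_list (take t (drop s zs)) y else 0)"
proof -
  have h: "\<And>l c. count_list (map (Pair c) l) (x, y) = (if x = c then count_list l y else 0)"
    by (induct_tac l) auto
  show ?thesis by (simp add: zip_append1 zip_replicate1 count_list_append h)
qed

lemma count_rep: "count_list (replicate k c) y = (if y = c then k else 0)"
  by (induction k) auto

lemma sorted_concat_rep: "sorted (concat (map (\<lambda>j. replicate (f j) j) [lo..<k]))"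
proof (induction k)
  case 0 then show ?case by simp
next
  case (Suc k)
  show ?case
  proof (cases "lo \<le> k")
    case True
    then show ?thesis using Suc by (auto simp: sorted_append)
  next
    case False then show ?thesis by simp
  qed
qed

lemma count_concat_rep: "count_list (concat (map (\<lambda>i. replicate (f i) i) [0..<k])) j = (if j < k then f j else 0)"
  by (induction k) (auto simp: count_list_append count_rep)

lemma set_concat_rep: "set (concat (map (\<lambda>i. replicate (f i) i) [0..<k])) = {j. j < k \<and> 0 < f j}"
  by auto

type_synonym kst = "nat \<times> nat \<times> nat \<times> nat \<times> nat \<times> nat"
definition gab :: "kst \<Rightarrow> kst" where
  "gab k = (case k of (A, B, C, x, y, z) \<Rightarrow> (B + min y A, A - y, C, x, z + min y A, y - A))"
definition gbc :: "kst \<Rightarrow> kst" where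
  "gbc k = (case k of (A, B, C, x, y, z) \<Rightarrow> (A, C - x, B + min C x, z + min C x, y, x - C))"
definition tot :: "kst \<Rightarrow> nat" where
  "tot k = (case k of (A, B, C, x, y, z) \<Rightarrow> A + B + C)"

lemma tot_gab[simp]: "tot (gab k) = tot k"
  by (cases k) (auto simp: gab_def tot_def)
lemma tot_gbc[simp]: "tot (gbc k) = tot k"
  by (cases k) (auto simp: gbc_def tot_def)

lemma braid_k:
  assumes "0 < z \<longrightarrow> B = 0"
  shows "gbc (gab (gbc (A, B, C, x, y, z))) = gab (gbc (gab (A, B, C, x, y, z)))"
proof -
  have h1: "min (B + m) (z + m) = m" "min (z + m) (B + m) = m" "B + m - (z + m) = B" "z + m - (B + m) = z" for m
    using assms by auto
  show ?thesis unfolding gab_def gbc_def by (simp add: h1 add.commute)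
qed

lemma fst_act: "fst (cactus_gen_act n p q D) = (\<lambda>x. fst D (crefl p q x))"
  by (simp add: cactus_gen_act_def Let_def)
definition ST :: "nat \<Rightarrow> nat \<Rightarrow> nat list \<Rightarrow> (nat \<Rightarrow> nat \<Rightarrow> nat) \<Rightarrow> kst \<Rightarrow> nat \<Rightarrow> nat \<Rightarrow> nat" where
  "ST a' n' W m0 k = (case k of (A, B, C, x, y, z) \<Rightarrow> MM a' n' W A (A + B) x y z m0)"

context fixes a n :: nat assumes a1: "1 \<le> a" and an: "Suc (Suc a) \<le> n" begin

lemma fo_fo: "inO a n y \<Longrightarrow> fo a n (fo a n y) = y"
  using a1 an by (auto simp: fo_def inO_def)
lemma fo_lt: "inO a n y \<Longrightarrow> fo a n y < n - 2"
  using a1 an by (auto simp: fo_def inO_def)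
lemma inO_fo: "j < n - 2 \<Longrightarrow> inO a n (fo a n j)"
  using a1 an by (auto simp: fo_def inO_def)
lemma fo_fo2: "j < n - 2 \<Longrightarrow> fo a n (fo a n j) = j"
  using a1 an by (auto simp: fo_def inO_def)

lemma outer_eq: "rev ([Suc (Suc (Suc a))..<Suc n] @ [0..<a]) = map (fo a n) [0..<n-2]"
proof (rule nth_equalityI)
  show "length (rev ([Suc (Suc (Suc a))..<Suc n] @ [0..<a])) = length (map (fo a n) [0..<n-2])"
    using an by (simp del: upt_Suc; arith)
next
  fix j assume "j < length (rev ([Suc (Suc (Suc a))..<Suc n] @ [0..<a]))"
  then have j: "j < n - 2" using an by (simp del: upt_Suc)
  show "rev ([Suc (Suc (Suc a))..<Suc n] @ [0..<a]) ! j = map (fo a n) [0..<n-2] ! j"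
    using j an a1 by (auto simp del: upt_Suc simp: rev_append nth_append rev_nth fo_def)
qed

lemma outer1: "rev ([Suc (Suc a)..<Suc n] @ [0..<a]) = map (fo a n) [0..<n-2] @ [Suc (Suc a)]"
proof -
  have "[Suc (Suc a)..<Suc n] = Suc (Suc a) # [Suc (Suc (Suc a))..<Suc n]"
    using an by (simp add: upt_conv_Cons)
  then show ?thesis using outer_eq by (simp add: rev_append)
qed

lemma outer2: "rev ([Suc (Suc (Suc a))..<Suc n] @ [0..<Suc a]) = a # map (fo a n) [0..<n-2]"
  using outer_eq by (simp add: rev_append)

lemma count_map_fo: "\<forall>x\<in>set B. x < n - 2 \<Longrightarrow>
   count_list (map (fo a n) B) y = (if inO a n y then count_list B (fo a n y) else 0)"
proof (induction B)
  case Nil then show ?case by simp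
next
  case (Cons x B)
  have "fo a n x = y \<longleftrightarrow> inO a n y \<and> x = fo a n y"
    using Cons.prems fo_fo fo_fo2 inO_fo by (metis list.set_intros(1))
  then show ?case using Cons by auto
qed

lemma inj_fo: "inj_on (fo a n) {0..<n-2}"
  by (rule inj_onI) (metis atLeastLessThan_iff fo_fo2)

lemma sum_fo: "\<forall>x\<in>set L. x < n - 2 \<Longrightarrow>
   (\<Sum>y\<in>fo a n ` {0..<n-2}. count_list L (fo a n y)) = length L"
proof -
  assume L: "\<forall>x\<in>set L. x < n - 2"
  have "(\<Sum>y\<in>fo a n ` {0..<n-2}. count_list L (fo a n y)) = (\<Sum>j\<in>{0..<n-2}. count_list L (fo a n (fo a n j)))"
    by (simp add: sum.reindex[OF inj_fo])
  also have "\<dots> = (\<Sum>j\<in>{0..<n-2}. count_list L j)" by (rule sum.cong) (auto simp: fo_fo2)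
  also have "\<dots> = length L" by (rule sum_count_set) (use L in auto)
  finally show ?thesis .
qed

lemma inO_not_T: "inO a n y \<Longrightarrow> \<not> Tm a y"
  by (auto simp: inO_def Tm_def)

lemma two_set: "{x..Suc x} = {x, Suc x}" by auto
lemma sum_two: "(\<Sum>y\<in>{x..Suc x}. f y) = f x + (f (Suc x) :: nat)" by (simp add: two_set)

lemma T_fo: "j < n - 2 \<Longrightarrow> \<not> Tm a (fo a n j)"
  using inO_fo inO_not_T by blast

lemma concat_map_fo: "concat (map (\<lambda>y. replicate (g y) y) (map (fo a n) xs)) =
     map (fo a n) (concat (map (\<lambda>j. replicate (g (fo a n j)) j) xs))"
  by (induction xs) auto

lemma fo_notc: "j < n - 2 \<Longrightarrow> fo a n j \<noteq> Suc (Suc a) \<and> fo a n j \<noteq> a \<and> fo a n j \<noteq> Suc a"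
  using inO_fo[of j] unfolding inO_def by auto

lemma take_seg: "u \<le> v \<Longrightarrow> count_list (take u W) j + count_list (drop u (take v W)) j = count_list (take v W) j"
proof -
  assume "u \<le> v"
  then have "take v W = take u W @ drop u (take v W)"
    by (metis append_take_drop_id min.absorb1 take_take)
  then show ?thesis by (metis count_list_append)
qed

lemma drop_seg: "u \<le> v \<Longrightarrow> count_list (drop u (take v W)) j + count_list (drop v W) j = count_list (drop u W) j"
proof -
  assume "u \<le> v"
  then have "drop u W = drop u (take v W) @ drop v W"
  proof -
    assume uv: "u \<le> v"
    have "drop u W = drop u (take v W @ drop v W)" by simp
    also have "\<dots> = drop u (take v W) @ drop (u - length (take v W)) (drop v W)" by (rule drop_append)
    also have "drop (u - length (take v W)) (drop v W) = drop v W"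
      using uv by (cases "v \<le> length W") auto
    finally show ?thesis .
  qed
  then show ?thesis by (metis count_list_append)
qed

lemma step1:
  fixes W :: "nat list" and u v ab bc ac :: nat and m0 :: "nat \<Rightarrow> nat \<Rightarrow> nat" and lab :: "nat \<Rightarrow> nat"
  assumes W: "sorted W" "\<forall>x\<in>set W. x < n - 2" and uv: "u \<le> v" "v \<le> length W"
  defines "s \<equiv> v - u + bc"
  shows "snd (cactus_gen_act n a (Suc a) (lab, MM a n W u v ab bc ac m0)) =
     MM a n W (min s v) v ab (ac + bc - (s - min s v)) (s - min s v) m0"
proof -
  define m where "m = MM a n W u v ab bc ac m0"
  define c where "c = Suc (Suc a)"
  define OL where "OL = map (fo a n) [0..<n-2]"
  have outer: "rev ([Suc (Suc a)..<Suc n] @ [0..<a]) = OL @ [c]" unfolding OL_def c_def by (rule outer1)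
  have cnotO: "c \<notin> fo a n ` {0..<n-2}" using fo_notc c_def by force
  have setO: "set (OL @ [c]) = insert c (fo a n ` {0..<n-2})" by (auto simp: OL_def)
  have segW: "\<forall>y\<in>set (seg a W u v x). y < n - 2" for x
    using W(2) by (auto simp: seg_def dest: in_set_takeD in_set_dropD)
  have cnt: "(\<Sum>y\<in>set (OL @ [c]). m x y) = length (seg a W u v x) + (if x = a then ac else bc)"
    if x: "x = a \<or> x = Suc a" for x
  proof -
    have "(\<Sum>y\<in>set (OL @ [c]). m x y) = m x c + (\<Sum>y\<in>fo a n ` {0..<n-2}. m x y)"
      unfolding setO using cnotO by (simp add: sum.insert)
    also have "m x c = (if x = a then ac else bc)" using x by (auto simp: m_def MM_def Tm_def tri_def c_def)
    also have "(\<Sum>y\<in>fo a n ` {0..<n-2}. m x y) = (\<Sum>y\<in>fo a n ` {0..<n-2}. count_list (seg a W u v x) (fo a n y))"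
      apply (rule sum.cong, simp)
      using x by (auto simp: m_def MM_def T_fo inO_fo fo_fo2) (auto simp: Tm_def)
    also have "\<dots> = length (seg a W u v x)" by (rule sum_fo[OF segW])
    finally show ?thesis by simp
  qed
  have lens: "length (seg a W u v a) = u" "length (seg a W u v (Suc a)) = v - u"
    using uv by (auto simp: seg_def)
  have ins: "concat (map (\<lambda>x. replicate (\<Sum>y\<in>set (OL @ [c]). m (a + Suc a - x) y) x) [a..<Suc (Suc a)])
      = replicate s a @ replicate (u + ac) (Suc a)"
    using cnt lens by (simp add: s_def)
  have outsO: "concat (map (\<lambda>y. replicate (\<Sum>x\<in>{a..Suc a}. m x y) y) OL) = map (fo a n) (take v W)"
  proof -
    have "concat (map (\<lambda>y. replicate (\<Sum>x\<in>{a..Suc a}. m x y) y) OL)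
       = map (fo a n) (concat (map (\<lambda>j. replicate (count_list (take v W) j) j) [0..<n-2]))"
      unfolding OL_def concat_map_fo
      apply (rule arg_cong[where f="\<lambda>l. map (fo a n) (concat l)"])
      apply (rule map_cong, simp)
      using take_seg[OF uv(1)] apply (simp only: sum_two)
      by (auto simp: m_def MM_def T_fo inO_fo fo_fo2 seg_def sum_two) (auto simp: Tm_def)
    also have "\<dots> = map (fo a n) (take v W)"
      using W by (subst concat_rep_sorted) (auto dest: in_set_takeD)
    finally show ?thesis .
  qed
  have outsc: "(\<Sum>x\<in>{a..Suc a}. m x c) = ac + bc"
    by (simp add: m_def MM_def Tm_def tri_def c_def sum_two)
  have outs: "concat (map (\<lambda>y. replicate (\<Sum>x\<in>{a..Suc a}. m x y) y) (OL @ [c])) = map (fo a n) (take v W) @ replicate (ac+bc) c"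
    by (simp only: map_append concat_append outsO) (use outsc in \<open>simp add: sum_two\<close>)
  have cp: "cross_pairs n a (Suc a) m = zip (replicate s a @ replicate (u + ac) (Suc a)) (map (fo a n) (take v W) @ replicate (ac + bc) c)"
    unfolding cross_pairs_def Let_def outer ins outs ..
  define r where "r = ac + bc"
  define zs where "zs = map (fo a n) (take v W) @ replicate r c"
  have sv: "s \<le> v + r" using uv by (simp add: s_def r_def)
  have lv: "length (map (fo a n) (take v W)) = v" using uv by simp
  have tk: "take s zs = map (fo a n) (take (min s v) W) @ replicate (s - min s v) c"
  proof -
    have "take s zs = take s (map (fo a n) (take v W)) @ take (s - v) (replicate r c)"
      unfolding zs_def take_append lv ..
    also have "\<dots> = map (fo a n) (take (min s v) W) @ replicate (s - min s v) c"
      using sv by (simp add: take_map min.commute)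
    finally show ?thesis .
  qed
  have dr: "take (u + ac) (drop s zs) = map (fo a n) (drop (min s v) (take v W)) @ replicate (r - (s - min s v)) c"
  proof -
    have l: "length (drop s zs) = u + ac" using uv by (simp add: zs_def s_def r_def)
    have "drop s zs = drop s (map (fo a n) (take v W)) @ drop (s - v) (replicate r c)"
      unfolding zs_def drop_append lv ..
    also have "\<dots> = map (fo a n) (drop (min s v) (take v W)) @ replicate (r - (s - min s v)) c"
      using uv by (cases "s \<le> v") (auto simp: drop_map min_def)
    finally have d: "drop s zs = map (fo a n) (drop (min s v) (take v W)) @ replicate (r - (s - min s v)) c" .
    have "take (u + ac) (drop s zs) = drop s zs" using l by simp
    then show ?thesis using d by simp
  qed
  have Wt: "\<forall>x\<in>set (take k W). x < n - 2" "\<forall>x\<in>set (drop k (take v W)). x < n - 2" for k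
    using W(2) by (auto dest: in_set_takeD in_set_dropD)
  have cO: "\<not> inO a n c" "\<not> inO a n a" "\<not> inO a n (Suc a)" by (auto simp: inO_def c_def)
  have cA: "count_list (zip (replicate s a @ replicate (u+ac) (Suc a)) zs) (a, y) =
     (if inO a n y then count_list (take (min s v) W) (fo a n y) else 0) + (if y = c then s - min s v else 0)" for y
    by (simp add: count_zip_rep tk count_list_append count_map_fo Wt count_rep)
  have cB: "count_list (zip (replicate s a @ replicate (u+ac) (Suc a)) zs) (Suc a, y) =
     (if inO a n y then count_list (drop (min s v) (take v W)) (fo a n y) else 0) + (if y = c then r - (s - min s v) else 0)" for y
    by (simp add: count_zip_rep dr count_list_append count_map_fo Wt count_rep)
  show ?thesis
  proof (rule ext, rule ext)
    fix x y
    show "snd (cactus_gen_act n a (Suc a) (lab, MM a n W u v ab bc ac m0)) x y =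
       MM a n W (min s v) v ab (ac + bc - (s - min s v)) (s - min s v) m0 x y"
      unfolding cactus_gen_act_def Let_def snd_conv m_def[symmetric] cp zs_def[symmetric]
      apply (cases "x = a"; cases "x = Suc a"; cases "y = a"; cases "y = Suc a")
      apply (simp_all add: cinside_def crefl_def cA[unfolded zs_def r_def] cB[unfolded zs_def r_def])
      apply (simp_all add: MM_def tri_def m_def seg_def c_def Tm_def cO[unfolded c_def])
      done
  qed
qed

lemma step2:
  fixes W :: "nat list" and u v ab bc ac :: nat and m0 :: "nat \<Rightarrow> nat \<Rightarrow> nat" and lab :: "nat \<Rightarrow> nat"
  assumes W: "sorted W" "\<forall>x\<in>set W. x < n - 2" and uv: "u \<le> v" "v \<le> length W"
  defines "s \<equiv> ac + (length W - v)"
  shows "snd (cactus_gen_act n (Suc a) (Suc (Suc a)) (lab, MM a n W u v ab bc ac m0)) =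
     MM a n W u (u + (s - min s (ab + ac))) (min s (ab + ac)) bc (ab + ac - min s (ab + ac)) m0"
proof -
  define m where "m = MM a n W u v ab bc ac m0"
  define c where "c = Suc (Suc a)"
  define OL where "OL = map (fo a n) [0..<n-2]"
  define q where "q = ab + ac"
  have outer: "rev ([Suc (Suc (Suc a))..<Suc n] @ [0..<Suc a]) = a # OL" unfolding OL_def by (rule outer2)
  have anotO: "a \<notin> fo a n ` {0..<n-2}" using fo_notc by force
  have setO: "set (a # OL) = insert a (fo a n ` {0..<n-2})" by (auto simp: OL_def)
  have segW: "\<forall>y\<in>set (seg a W u v x). y < n - 2" for x
    using W(2) by (auto simp: seg_def dest: in_set_takeD in_set_dropD)
  have cnt: "(\<Sum>y\<in>set (a # OL). m x y) = length (seg a W u v x) + (if x = Suc a then ab else ac)"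
    if x: "x = Suc a \<or> x = c" for x
  proof -
    have "(\<Sum>y\<in>set (a # OL). m x y) = m x a + (\<Sum>y\<in>fo a n ` {0..<n-2}. m x y)"
      unfolding setO using anotO by (simp add: sum.insert)
    also have "m x a = (if x = Suc a then ab else ac)" using x by (auto simp: m_def MM_def Tm_def tri_def c_def)
    also have "(\<Sum>y\<in>fo a n ` {0..<n-2}. m x y) = (\<Sum>y\<in>fo a n ` {0..<n-2}. count_list (seg a W u v x) (fo a n y))"
      apply (rule sum.cong, simp)
      using x by (auto simp: m_def MM_def T_fo inO_fo fo_fo2 c_def) (auto simp: Tm_def)
    also have "\<dots> = length (seg a W u v x)" by (rule sum_fo[OF segW])
    finally show ?thesis by simp
  qed
  have lens: "length (seg a W u v (Suc a)) = v - u" "length (seg a W u v c) = length W - v"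
    using uv by (auto simp: seg_def c_def)
  have ins: "concat (map (\<lambda>x. replicate (\<Sum>y\<in>set (a # OL). m (Suc a + Suc (Suc a) - x) y) x) [Suc a..<Suc (Suc (Suc a))])
      = replicate s (Suc a) @ replicate (ab + (v - u)) (Suc (Suc a))"
    using cnt lens unfolding c_def by (simp add: s_def)
  have outsO: "concat (map (\<lambda>y. replicate (\<Sum>x\<in>{Suc a..Suc (Suc a)}. m x y) y) OL) = map (fo a n) (drop u W)"
  proof -
    have "concat (map (\<lambda>y. replicate (\<Sum>x\<in>{Suc a..Suc (Suc a)}. m x y) y) OL)
       = map (fo a n) (concat (map (\<lambda>j. replicate (count_list (drop u W) j) j) [0..<n-2]))"
      unfolding OL_def concat_map_fo
      apply (rule arg_cong[where f="\<lambda>l. map (fo a n) (concat l)"])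
      apply (rule map_cong, simp)
      using drop_seg[OF uv(1)] apply (simp only: sum_two)
      by (auto simp: m_def MM_def T_fo inO_fo fo_fo2 seg_def) (auto simp: Tm_def)
    also have "\<dots> = map (fo a n) (drop u W)"
      using W by (subst concat_rep_sorted) (auto dest: in_set_dropD)
    finally show ?thesis .
  qed
  have outsa: "(\<Sum>x\<in>{Suc a..Suc (Suc a)}. m x a) = q"
    by (simp add: m_def MM_def Tm_def tri_def c_def sum_two q_def)
  have outs: "concat (map (\<lambda>y. replicate (\<Sum>x\<in>{Suc a..Suc (Suc a)}. m x y) y) (a # OL)) = replicate q a @ map (fo a n) (drop u W)"
    by (simp only: list.map concat.simps outsO outsa)
  have cp: "cross_pairs n (Suc a) (Suc (Suc a)) m = zip (replicate s (Suc a) @ replicate (ab + (v - u)) (Suc (Suc a))) (replicate q a @ map (fo a n) (drop u W))"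
    unfolding cross_pairs_def Let_def outer ins outs ..
  define zs where "zs = replicate q a @ map (fo a n) (drop u W)"
  define v' where "v' = u + (s - min s q)"
  have vq: "v' = u + (s - q)" by (simp add: v'_def min_def)
  have v'le: "v' \<le> length W" using uv by (simp add: v'_def s_def q_def)
  have lq: "length (replicate q a) = q" by simp
  have tk: "take s zs = replicate (min s q) a @ map (fo a n) (drop u (take v' W))"
  proof -
    have "take s zs = take s (replicate q a) @ take (s - q) (map (fo a n) (drop u W))"
      unfolding zs_def take_append lq ..
    also have "\<dots> = replicate (min s q) a @ map (fo a n) (drop u (take v' W))"
      by (simp add: take_map take_drop vq add.commute)
    finally show ?thesis .
  qed
  have dr: "take (ab + (v - u)) (drop s zs) = replicate (q - s) a @ map (fo a n) (drop v' W)"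
  proof -
    have l: "length (drop s zs) = ab + (v - u)" using uv by (simp add: zs_def s_def q_def)
    have "drop s zs = drop s (replicate q a) @ drop (s - q) (map (fo a n) (drop u W))"
      unfolding zs_def drop_append lq ..
    also have "\<dots> = replicate (q - s) a @ map (fo a n) (drop v' W)"
      by (simp add: drop_map vq add.commute)
    finally have d: "drop s zs = replicate (q - s) a @ map (fo a n) (drop v' W)" .
    have "take (ab + (v - u)) (drop s zs) = drop s zs" using l by simp
    then show ?thesis using d by simp
  qed
  have Wt: "\<forall>x\<in>set (drop u (take k W)). x < n - 2" "\<forall>x\<in>set (drop k W). x < n - 2" for k
    using W(2) by (auto dest: in_set_takeD in_set_dropD)
  have cO: "\<not> inO a n c" "\<not> inO a n a" "\<not> inO a n (Suc a)" by (auto simp: inO_def c_def)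
  have cA: "count_list (zip (replicate s (Suc a) @ replicate (ab + (v - u)) (Suc (Suc a))) zs) (Suc a, y) =
     (if y = a then min s q else 0) + (if inO a n y then count_list (drop u (take v' W)) (fo a n y) else 0)" for y
    by (simp add: count_zip_rep tk count_list_append count_map_fo Wt count_rep)
  have cB: "count_list (zip (replicate s (Suc a) @ replicate (ab + (v - u)) (Suc (Suc a))) zs) (Suc (Suc a), y) =
     (if y = a then ab + ac - min s (ab + ac) else 0) + (if inO a n y then count_list (drop v' W) (fo a n y) else 0)" for y
  proof -
    have qs: "q - s = ab + ac - min s (ab + ac)" by (simp add: q_def)
    show ?thesis unfolding qs[symmetric]
      by (simp add: count_zip_rep dr count_list_append count_map_fo Wt count_rep)
  qed
  show ?thesis
  proof (rule ext, rule ext)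
    fix x y
    show "snd (cactus_gen_act n (Suc a) (Suc (Suc a)) (lab, MM a n W u v ab bc ac m0)) x y =
       MM a n W u (u + (s - min s (ab + ac))) (min s (ab + ac)) bc (ab + ac - min s (ab + ac)) m0 x y"
      unfolding cactus_gen_act_def Let_def snd_conv m_def[symmetric] cp[unfolded q_def]
      apply (cases "x = Suc a"; cases "x = Suc (Suc a)"; cases "y = Suc a"; cases "y = Suc (Suc a)")
      apply (simp_all add: cinside_def crefl_def cA[unfolded zs_def q_def v'_def] cB[unfolded zs_def q_def v'_def])
      apply (simp_all add: MM_def tri_def m_def seg_def c_def Tm_def cO[unfolded c_def])
      done
  qed
qed

lemma planar_order:
  fixes m :: "nat \<Rightarrow> nat \<Rightarrow> nat"
  assumes sym: "\<forall>p q. m p q = m q p"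
    and cross: "\<forall>p q r t. p < r \<and> r < q \<and> q < t \<and> 0 < m p q \<longrightarrow> m r t = 0"
    and xy: "x < y" "a \<le> x" "y \<le> Suc (Suc a)"
    and j: "j < n - 2" "j' < n - 2" and pos: "0 < m x (fo a n j)" "0 < m y (fo a n j')"
  shows "j \<le> j'"
proof (rule ccontr)
  assume "\<not> j \<le> j'"
  then have jj: "j' < j" by simp
  have pos': "0 < m (fo a n j) x" "0 < m (fo a n j') y" using pos sym by metis+
  show False
  proof (cases "j' < a")
    case True
    show False
    proof (cases "j < a")
      case True
      have "fo a n j < fo a n j'" "fo a n j' < x" using \<open>j' < a\<close> True jj xy a1 by (auto simp: fo_def)
      then have "m (fo a n j') y = 0"
        using cross[rule_format, where p="fo a n j" and q=x and r="fo a n j'" and t=y] xy pos' by simp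
      then show False using pos' by simp
    next
      case False
      have "fo a n j' < x" "y < fo a n j" using \<open>j' < a\<close> False j xy a1 an by (auto simp: fo_def)
      then have "m x (fo a n j) = 0"
        using cross[rule_format, where p="fo a n j'" and q=y and r=x and t="fo a n j"] xy pos' by simp
      then show False using pos by simp
    qed
  next
    case False
    have "y < fo a n j" "fo a n j < fo a n j'" using False jj j xy a1 an by (auto simp: fo_def)
    then have "m y (fo a n j') = 0"
      using cross[rule_format, where p=x and q="fo a n j" and r=y and t="fo a n j'"] xy pos by simp
    then show False using pos by simp
  qed
qed

lemma represent:
  fixes m :: "nat \<Rightarrow> nat \<Rightarrow> nat"
  assumes D: "(lab, m) \<in> arc_diagrams n l linf"
  defines "R \<equiv> \<lambda>x. concat (map (\<lambda>j. replicate (m x (fo a n j)) j) [0..<n-2])"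
  defines "W \<equiv> R a @ R (Suc a) @ R (Suc (Suc a))"
  defines "u \<equiv> length (R a)"
  defines "v \<equiv> length (R a) + length (R (Suc a))"
  shows "sorted W" "\<forall>x\<in>set W. x < n - 2" "u \<le> v" "v \<le> length W"
    "m = MM a n W u v (m a (Suc a)) (m (Suc a) (Suc (Suc a))) (m a (Suc (Suc a))) m"
    "0 < m a (Suc (Suc a)) \<longrightarrow> u = v"
proof -
  have sym: "\<forall>p q. m p q = m q p" and diag: "\<forall>p. m p p = 0"
    and big: "\<forall>p q. (p > n \<or> q > n) \<longrightarrow> m p q = 0"
    and cross: "\<forall>p q r t. p < r \<and> r < q \<and> q < t \<and> 0 < m p q \<longrightarrow> m r t = 0"
    using D unfolding arc_diagrams_def mem_Collect_eq prod.case by blast+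
  have setR: "set (R x) = {j. j < n - 2 \<and> 0 < m x (fo a n j)}" for x
    unfolding R_def by (rule set_concat_rep)
  have cR: "count_list (R x) j = (if j < n - 2 then m x (fo a n j) else 0)" for x j
    unfolding R_def by (rule count_concat_rep)
  have sR: "sorted (R x)" for x unfolding R_def by (rule sorted_concat_rep)
  have ord: "\<forall>p\<in>set (R x). \<forall>q\<in>set (R y). p \<le> q" if "x < y" "a \<le> x" "y \<le> Suc (Suc a)" for x y
    using planar_order[OF sym cross that] unfolding setR by auto
  have o1: "\<forall>p\<in>set (R a). \<forall>q\<in>set (R (Suc a)). p \<le> q" by (rule ord) auto
  have o2: "\<forall>p\<in>set (R a). \<forall>q\<in>set (R (Suc (Suc a))). p \<le> q" by (rule ord) auto
  have o3: "\<forall>p\<in>set (R (Suc a)). \<forall>q\<in>set (R (Suc (Suc a))). p \<le> q" by (rule ord) auto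
  show "sorted W" unfolding W_def using sR o1 o2 o3 by (auto simp: sorted_append)
  show "\<forall>x\<in>set W. x < n - 2" unfolding W_def using setR by auto
  show "u \<le> v" "v \<le> length W" unfolding u_def v_def W_def by auto
  have tk: "take u W = R a" "drop u (take v W) = R (Suc a)" "drop v W = R (Suc (Suc a))"
    unfolding u_def v_def W_def by auto
  show "0 < m a (Suc (Suc a)) \<longrightarrow> u = v"
  proof
    assume pos: "0 < m a (Suc (Suc a))"
    have "R (Suc a) = []"
    proof -
      have "m (Suc a) (fo a n j) = 0" if j: "j < n - 2" for j
      proof (cases "j < a")
        case True
        then have "fo a n j < a" using a1 by (auto simp: fo_def)
        then have "m (fo a n j) (Suc a) = 0" using cross[rule_format, where p="fo a n j" and q="Suc a" and r=a and t="Suc (Suc a)"] pos by auto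
        then show ?thesis using sym by metis
      next
        case False
        then have "Suc (Suc a) < fo a n j" using j an by (auto simp: fo_def)
        moreover have "a < Suc a" "Suc a < Suc (Suc a)" by auto
        ultimately show ?thesis using cross pos by blast
      qed
      then have "set (R (Suc a)) = {}" using setR[of "Suc a"] by auto
      then show ?thesis by simp
    qed
    then show "u = v" unfolding u_def v_def by simp
  qed
  show "m = MM a n W u v (m a (Suc a)) (m (Suc a) (Suc (Suc a))) (m a (Suc (Suc a))) m"
  proof (rule ext, rule ext)
    fix x y
    have segs: "seg a W u v x = R x" if "Tm a x" for x
      using that tk by (auto simp: seg_def Tm_def le_Suc_eq)
    have rowO: "m x y = count_list (seg a W u v x) (fo a n y)" if "Tm a x" "inO a n y" for x y
      using that segs cR fo_lt fo_fo by simp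
    have rowN: "m x y = 0" if "Tm a x" "\<not> inO a n y" "\<not> Tm a y" for x y
    proof -
      have "n < y" using that an by (auto simp: Tm_def inO_def)
      then show ?thesis using big by auto
    qed
    show "m x y = MM a n W u v (m a (Suc a)) (m (Suc a) (Suc (Suc a))) (m a (Suc (Suc a))) m x y"
    proof (cases "Tm a x \<and> Tm a y")
      case True
      have s1: "m (Suc a) a = m a (Suc a)" "m (Suc (Suc a)) a = m a (Suc (Suc a))"
        "m (Suc (Suc a)) (Suc a) = m (Suc a) (Suc (Suc a))" using sym by metis+
      have xs: "x = a \<or> x = Suc a \<or> x = Suc (Suc a)" "y = a \<or> y = Suc a \<or> y = Suc (Suc a)"
        using True by (auto simp: Tm_def le_Suc_eq)
      then show ?thesis using True diag s1
        by (elim disjE) (simp_all add: MM_def tri_def)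
    next
      case False
      show ?thesis
      proof (cases "Tm a x")
        case True
        then have "\<not> Tm a y" using False by simp
        then show ?thesis using True rowO[of x y] rowN[of x y] by (simp add: MM_def)
      next
        case nx: False
        show ?thesis
        proof (cases "Tm a y")
          case True
          have "m x y = m y x" using sym by metis
          then show ?thesis using True nx rowO[of y x] rowN[of y x] by (simp add: MM_def)
        next
          case False
          then show ?thesis using nx by (simp add: MM_def)
        qed
      qed
    qed
  qed
qed

lemma step1':
  assumes W: "sorted W" "\<forall>x\<in>set W. x < n - 2" and uv: "u \<le> v" "v \<le> length W"
    and e: "u' = min (v - u + bc) v" "v' = v" "bc' = ac + bc - ((v - u + bc) - min (v - u + bc) v)"
      "ac' = (v - u + bc) - min (v - u + bc) v"
  shows "snd (cactus_gen_act n a (Suc a) (lab, MM a n W u v ab bc ac m0)) = MM a n W u' v' ab bc' ac' m0"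
  using step1[OF W uv] e by simp

lemma step2':
  assumes W: "sorted W" "\<forall>x\<in>set W. x < n - 2" and uv: "u \<le> v" "v \<le> length W"
    and e: "v' = u + ((ac + (length W - v)) - min (ac + (length W - v)) (ab + ac))"
      "ab' = min (ac + (length W - v)) (ab + ac)" "ac' = ab + ac - min (ac + (length W - v)) (ab + ac)"
  shows "snd (cactus_gen_act n (Suc a) (Suc (Suc a)) (lab, MM a n W u v ab bc ac m0)) = MM a n W u v' ab' bc ac' m0"
  using step2[OF W uv] e by simp


lemma stepA:
  assumes W: "sorted W" "\<forall>x\<in>set W. x < n - 2" and t: "tot k = length W"
  shows "cactus_gen_act n a (Suc a) (lab, ST a n W m0 k) = (\<lambda>q. lab (crefl a (Suc a) q), ST a n W m0 (gab k))"
proof -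
  obtain A B C x y z where k: "k = (A, B, C, x, y, z)" by (cases k) auto
  have uv: "A \<le> A + B" "A + B \<le> length W" using t k by (auto simp: tot_def)
  have "snd (cactus_gen_act n a (Suc a) (lab, ST a n W m0 k)) = ST a n W m0 (gab k)"
    unfolding k ST_def gab_def prod.case
    by (rule step1'[OF W uv]) (auto simp: min_def)
  moreover have "fst (cactus_gen_act n a (Suc a) (lab, ST a n W m0 k)) = (\<lambda>q. lab (crefl a (Suc a) q))"
    by (simp add: fst_act)
  ultimately show ?thesis by (metis prod.collapse)
qed

lemma stepB:
  assumes W: "sorted W" "\<forall>x\<in>set W. x < n - 2" and t: "tot k = length W"
  shows "cactus_gen_act n (Suc a) (Suc (Suc a)) (lab, ST a n W m0 k) = (\<lambda>q. lab (crefl (Suc a) (Suc (Suc a)) q), ST a n W m0 (gbc k))"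
proof -
  obtain A B C x y z where k: "k = (A, B, C, x, y, z)" by (cases k) auto
  have uv: "A \<le> A + B" "A + B \<le> length W" using t k by (auto simp: tot_def)
  have N: "length W - (A + B) = C" using t k by (auto simp: tot_def)
  have "snd (cactus_gen_act n (Suc a) (Suc (Suc a)) (lab, ST a n W m0 k)) = ST a n W m0 (gbc k)"
    unfolding k ST_def gbc_def prod.case
    by (rule step2'[OF W uv]) (use N in \<open>auto simp: min_def\<close>)
  moreover have "fst (cactus_gen_act n (Suc a) (Suc (Suc a)) (lab, ST a n W m0 k)) = (\<lambda>q. lab (crefl (Suc a) (Suc (Suc a)) q))"
    by (simp add: fst_act)
  ultimately show ?thesis by (metis prod.collapse)
qed

lemma represent_ex:
  fixes m :: "nat \<Rightarrow> nat \<Rightarrow> nat"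
  assumes D: "(lab, m) \<in> arc_diagrams n l linf"
  shows "\<exists>W u v. sorted W \<and> (\<forall>x\<in>set W. x < n - 2) \<and> u \<le> v \<and> v \<le> length W \<and>
    m = MM a n W u v (m a (Suc a)) (m (Suc a) (Suc (Suc a))) (m a (Suc (Suc a))) m \<and>
    (0 < m a (Suc (Suc a)) \<longrightarrow> u = v)"
  by (intro exI conjI, (rule represent[OF D])+)

end

theorem mainTheorem15:
  fixes n i linf :: nat and l :: "nat \<Rightarrow> nat"
  assumes "3 \<le> n" and "2 \<le> i" and "i \<le> n - 1"
  shows "\<forall>D \<in> arc_diagrams n l linf.
    cactus_gen_act n i (i+1) (cactus_gen_act n (i-1) i (cactus_gen_act n i (i+1) D)) =
    cactus_gen_act n (i-1) i (cactus_gen_act n i (i+1) (cactus_gen_act n (i-1) i D))"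
proof
  fix D assume D: "D \<in> arc_diagrams n l linf"
  obtain lab m where Dp: "D = (lab, m)" by (cases D)
  obtain a where ia: "i = Suc a" using assms(2) by (cases i) auto
  have a1: "1 \<le> a" and an: "Suc (Suc a) \<le> n" using assms ia by auto
  have e1: "i - 1 = a" "i + 1 = Suc (Suc a)" using ia by auto
  obtain W u v where W: "sorted W" "\<forall>x\<in>set W. x < n - 2" and uv: "u \<le> v" "v \<le> length W"
    and mW: "m = MM a n W u v (m a (Suc a)) (m (Suc a) (Suc (Suc a))) (m a (Suc (Suc a))) m"
    and pl: "0 < m a (Suc (Suc a)) \<longrightarrow> u = v"
    using represent_ex[OF a1 an D[unfolded Dp]] apply (elim exE conjE) apply (rule that) by assumption+
  define k0 where "k0 = (u, v - u, length W - v, m a (Suc a), m (Suc a) (Suc (Suc a)), m a (Suc (Suc a)))"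
  have t0: "tot k0 = length W" using uv by (simp add: k0_def tot_def)
  have st: "ST a n W m k0 = MM a n W u v (m a (Suc a)) (m (Suc a) (Suc (Suc a))) (m a (Suc (Suc a))) m"
    using uv by (simp add: k0_def ST_def)
  have Dk: "D = (lab, ST a n W m k0)"
    using Dp mW st by metis
  have br: "gbc (gab (gbc k0)) = gab (gbc (gab k0))"
    unfolding k0_def by (rule braid_k) (use pl uv in auto)
  have lab_eq: "(\<lambda>q. lab (crefl (Suc a) (Suc (Suc a)) (crefl a (Suc a) (crefl (Suc a) (Suc (Suc a)) q)))) =
      (\<lambda>q. lab (crefl a (Suc a) (crefl (Suc a) (Suc (Suc a)) (crefl a (Suc a) q))))"
  proof (rule ext)
    fix q
    have "crefl (Suc a) (Suc (Suc a)) (crefl a (Suc a) (crefl (Suc a) (Suc (Suc a)) q)) =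
          crefl a (Suc a) (crefl (Suc a) (Suc (Suc a)) (crefl a (Suc a) q))"
    proof -
      have c: "crefl p (Suc p) p = Suc p" "crefl p (Suc p) (Suc p) = p"
        "x \<noteq> p \<Longrightarrow> x \<noteq> Suc p \<Longrightarrow> crefl p (Suc p) x = x" for p x
        by (auto simp: crefl_def)
      show ?thesis
        by (cases "q = a"; cases "q = Suc a"; cases "q = Suc (Suc a)") (simp_all add: c)
    qed
    then show "lab (crefl (Suc a) (Suc (Suc a)) (crefl a (Suc a) (crefl (Suc a) (Suc (Suc a)) q))) =
          lab (crefl a (Suc a) (crefl (Suc a) (Suc (Suc a)) (crefl a (Suc a) q)))" by simp
  qed
  show "cactus_gen_act n i (i+1) (cactus_gen_act n (i-1) i (cactus_gen_act n i (i+1) D)) =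
    cactus_gen_act n (i-1) i (cactus_gen_act n i (i+1) (cactus_gen_act n (i-1) i D))"
    unfolding e1 Dk ia
    using stepA[OF a1 an W] stepB[OF a1 an W] t0 br lab_eq by simp
qed


end
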